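(* Let $G$ be a finite, simple, connected graph of order $n\ge 4$. If there exists a vertex $u\in V(G)$ with $\deg(u)=n-3$ such that the two vertices of $V(G)\setminus N[u]$ are not twins, then $\gamma_P(G)=1$.
   Context: Two vertices $x,y$ are twins if $N(x)=N(y)$ or $N[x]=N[y]$. For $U\subseteq V(G)$, $cl(U)$ is obtained by coloring $U$ black and repeatedly applying: if a black vertex has exactly one white neighbor, that neighbor becomes black. $S$ is a power dominating set if $cl(N[S])=V(G)$; $\gamma_P(G)$ is the minimum size of a power dominating set. *)

theory Defs
  imports Main
begin

definition simple_graph :: "'a set \<Rightarrow> ('a \<Rightarrow> 'a \<Rightarrow> bool) \<Rightarrow> bool" where
  "simple_graph V E \<longleftrightarrow> finite V \<and> (\<forall>x y. E x y \<longrightarrow> x \<in> V \<and> y \<in> V) \<and>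
     (\<forall>x y. E x y \<longrightarrow> E y x) \<and> (\<forall>x. \<not> E x x)"

definition nbhd :: "'a set \<Rightarrow> ('a \<Rightarrow> 'a \<Rightarrow> bool) \<Rightarrow> 'a \<Rightarrow> 'a set" where
  "nbhd V E x = {y \<in> V. E x y}"

definition cnbhd :: "'a set \<Rightarrow> ('a \<Rightarrow> 'a \<Rightarrow> bool) \<Rightarrow> 'a \<Rightarrow> 'a set" where
  "cnbhd V E x = insert x (nbhd V E x)"

definition degree :: "'a set \<Rightarrow> ('a \<Rightarrow> 'a \<Rightarrow> bool) \<Rightarrow> 'a \<Rightarrow> nat" where
  "degree V E x = card (nbhd V E x)"

definition set_cnbhd :: "'a set \<Rightarrow> ('a \<Rightarrow> 'a \<Rightarrow> bool) \<Rightarrow> 'a set \<Rightarrow> 'a set" where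
  "set_cnbhd V E S = (\<Union>x\<in>S. cnbhd V E x)"

inductive reachable :: "'a set \<Rightarrow> ('a \<Rightarrow> 'a \<Rightarrow> bool) \<Rightarrow> 'a \<Rightarrow> 'a \<Rightarrow> bool"
  for V E where
  refl: "x \<in> V \<Longrightarrow> reachable V E x x"
| step: "reachable V E x y \<Longrightarrow> E y z \<Longrightarrow> reachable V E x z"

definition connected_graph :: "'a set \<Rightarrow> ('a \<Rightarrow> 'a \<Rightarrow> bool) \<Rightarrow> bool" where
  "connected_graph V E \<longleftrightarrow> V \<noteq> {} \<and> (\<forall>x\<in>V. \<forall>y\<in>V. reachable V E x y)"

definition twins :: "'a set \<Rightarrow> ('a \<Rightarrow> 'a \<Rightarrow> bool) \<Rightarrow> 'a \<Rightarrow> 'a \<Rightarrow> bool" where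
  "twins V E x y \<longleftrightarrow> nbhd V E x = nbhd V E y \<or> cnbhd V E x = cnbhd V E y"

definition force_step :: "'a set \<Rightarrow> ('a \<Rightarrow> 'a \<Rightarrow> bool) \<Rightarrow> 'a set \<Rightarrow> 'a set" where
  "force_step V E B = B \<union> {w. \<exists>v\<in>B. nbhd V E v - B = {w}}"

text \<open>Closure: iterating until stable; card V rounds suffice since each
  non-stable round adds a vertex of V.\<close>
definition cl :: "'a set \<Rightarrow> ('a \<Rightarrow> 'a \<Rightarrow> bool) \<Rightarrow> 'a set \<Rightarrow> 'a set" where
  "cl V E U = (force_step V E ^^ card V) U"

definition power_dominating :: "'a set \<Rightarrow> ('a \<Rightarrow> 'a \<Rightarrow> bool) \<Rightarrow> 'a set \<Rightarrow> bool" where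
  "power_dominating V E S \<longleftrightarrow> S \<subseteq> V \<and> cl V E (set_cnbhd V E S) = V"

definition power_domination_number :: "'a set \<Rightarrow> ('a \<Rightarrow> 'a \<Rightarrow> bool) \<Rightarrow> nat" where
  "power_domination_number V E = (LEAST k. \<exists>S. power_dominating V E S \<and> card S = k)"

end

theory Submission
  imports Defs
begin

lemma fs_sub: "simple_graph V E \<Longrightarrow> B \<subseteq> V \<Longrightarrow> force_step V E B \<subseteq> V"
  unfolding force_step_def nbhd_def by blast

lemma fs_ext: "B \<subseteq> force_step V E B"
  unfolding force_step_def by blast

lemma fs_add: "v \<in> B \<Longrightarrow> nbhd V E v - B = {w} \<Longrightarrow> w \<in> force_step V E B"
  unfolding force_step_def by blast

lemma fs_V: "simple_graph V E \<Longrightarrow> force_step V E V = V"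
  using fs_sub fs_ext by (metis subset_antisym subset_refl)

lemma funpow_V: "simple_graph V E \<Longrightarrow> (force_step V E ^^ k) V = V"
  by (induction k) (auto simp: fs_V)

lemma last_step:
  assumes sg: "simple_graph V E" and "B \<subseteq> V" and "V - {c} \<subseteq> B" and "E x c"
  shows "force_step V E B = V"
proof (cases "c \<in> B")
  case True
  then have "B = V" using assms by blast
  then show ?thesis using fs_V sg by simp
next
  case False
  have xV: "x \<in> V" "c \<in> V" "x \<noteq> c" using sg assms(4) unfolding simple_graph_def by metis+
  then have "x \<in> B" using assms by blast
  moreover have "nbhd V E x - B = {c}" using assms xV False unfolding nbhd_def by blast
  ultimately have "c \<in> force_step V E B" by (rule fs_add)
  then have "V \<subseteq> force_step V E B" using fs_ext[of B V E] assms by blast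
  then show ?thesis using fs_sub[OF sg assms(2)] by blast
qed

lemma fs_empty: "force_step V E {} = {}"
  unfolding force_step_def by blast

theorem mainTheorem7:
  fixes V :: "'a set" and E :: "'a \<Rightarrow> 'a \<Rightarrow> bool" and u :: 'a
  assumes "simple_graph V E" and "connected_graph V E" and "card V \<ge> 4"
    and "u \<in> V" and "degree V E u = card V - 3"
    and "\<forall>x y. x \<in> V - cnbhd V E u \<and> y \<in> V - cnbhd V E u \<and> x \<noteq> y \<longrightarrow> \<not> twins V E x y"
  shows "power_domination_number V E = 1"
proof -
  note sg = assms(1)
  have finV: "finite V" using sg unfolding simple_graph_def by blast
  have cV: "cnbhd V E u \<subseteq> V" using assms(4) unfolding cnbhd_def nbhd_def by blast
  have un: "u \<notin> nbhd V E u" using sg unfolding nbhd_def simple_graph_def by blast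
  have fn: "finite (nbhd V E u)" using finV unfolding nbhd_def by simp
  have "card (cnbhd V E u) = card V - 2"
    using un fn assms(3,5) unfolding cnbhd_def degree_def by simp
  then have "card (V - cnbhd V E u) = 2"
    using card_Diff_subset[OF finite_subset[OF cV finV] cV] assms(3) by simp
  then obtain a b where ab: "V - cnbhd V E u = {a,b}" "a \<noteq> b"
    by (meson card_2_iff)
  have abV: "a \<in> V" "b \<in> V" using ab by auto
  have nt: "\<not> twins V E a b" using assms(6) ab by blast
  have sym: "\<And>x y. E x y \<Longrightarrow> E y x" and irr: "\<And>x. \<not> E x x"
    and inV: "\<And>x y. E x y \<Longrightarrow> x \<in> V \<and> y \<in> V"
    using sg unfolding simple_graph_def by blast+
  have "\<exists>y\<in>V. y \<noteq> a \<and> y \<noteq> b \<and> E a y \<noteq> E b y"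
  proof (cases "E a b")
    case True
    then have "cnbhd V E a \<noteq> cnbhd V E b" using nt unfolding twins_def by blast
    then obtain y where "y \<in> V" "(y = a \<or> E a y) \<noteq> (y = b \<or> E b y)"
    proof -
      have "\<exists>y\<in>V. (y = a \<or> E a y) \<noteq> (y = b \<or> E b y)"
      proof (rule ccontr)
        assume "\<not> ?thesis"
        then have "cnbhd V E a = cnbhd V E b" using abV unfolding cnbhd_def nbhd_def by auto
        then show False using \<open>cnbhd V E a \<noteq> cnbhd V E b\<close> by blast
      qed
      then show ?thesis using that by blast
    qed
    then obtain y where yy: "y \<in> V" "(y = a \<or> E a y) \<noteq> (y = b \<or> E b y)" by blast
    have "E b a" using True sym by blast
    then have "y \<noteq> a" "y \<noteq> b" using yy(2) True by auto
    then show ?thesis using yy by auto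
  next
    case False
    then have "nbhd V E a \<noteq> nbhd V E b" using nt unfolding twins_def by blast
    then have "\<exists>y\<in>V. E a y \<noteq> E b y" unfolding nbhd_def by blast
    then obtain y where yy: "y \<in> V" "E a y \<noteq> E b y" by blast
    have "\<not> E b a" using False sym by blast
    then have "y \<noteq> a" "y \<noteq> b" using yy(2) False irr by auto
    then show ?thesis using yy by auto
  qed
  then obtain y where y: "y \<in> V" "y \<noteq> a" "y \<noteq> b" "E a y \<noteq> E b y" by blast
  define B0 where "B0 = V - {a,b}"
  have B0: "set_cnbhd V E {u} = B0"
    unfolding set_cnbhd_def B0_def using ab cV by auto
  have yB: "y \<in> B0" using y B0_def by blast
  define B1 where "B1 = force_step V E B0"
  have B1V: "B1 \<subseteq> V" unfolding B1_def by (rule fs_sub[OF sg]) (auto simp: B0_def)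
  have B01: "B0 \<subseteq> B1" unfolding B1_def by (rule fs_ext)
  obtain z where z: "E z b"
  proof -
    have "reachable V E u b" using assms(2) assms(4) abV unfolding connected_graph_def by blast
    moreover have "u \<noteq> b" using ab unfolding cnbhd_def by blast
    ultimately show ?thesis using that by cases auto
  qed
  obtain z' where z': "E z' a"
  proof -
    have "reachable V E u a" using assms(2) assms(4) abV unfolding connected_graph_def by blast
    moreover have "u \<noteq> a" using ab unfolding cnbhd_def by blast
    ultimately show ?thesis using that by cases auto
  qed
  have step2: "force_step V E B1 = V"
  proof (cases "E a y")
    case True
    then have "\<not> E b y" using y by blast
    then have "nbhd V E y - B0 = {a}" using True abV inV sym unfolding nbhd_def B0_def by blast
    then have "a \<in> B1" unfolding B1_def using fs_add yB by metis
    then have "V - {b} \<subseteq> B1" using B01 B0_def by blast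
    then show ?thesis using last_step[OF sg B1V _ z] by blast
  next
    case False
    then have "E b y" using y by blast
    then have "nbhd V E y - B0 = {b}" using False abV inV sym unfolding nbhd_def B0_def by blast
    then have "b \<in> B1" unfolding B1_def using fs_add yB by metis
    then have "V - {a} \<subseteq> B1" using B01 B0_def by blast
    then show ?thesis using last_step[OF sg B1V _ z'] by blast
  qed
  have "(force_step V E ^^ 2) B0 = V" using step2 by (simp add: B1_def numeral_2_eq_2)
  moreover have "card V = (card V - 2) + 2" using assms(3) by simp
  ultimately have clV: "cl V E B0 = V" unfolding cl_def by (metis funpow_add comp_apply funpow_V[OF sg])
  have P1: "power_dominating V E {u}" unfolding power_dominating_def using B0 clV assms(4) by simp
  have fe: "(force_step V E ^^ k) {} = {}" for k by (induction k) (auto simp: fs_empty)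
  have Vne: "V \<noteq> {}" using assms(4) by blast
  show ?thesis unfolding power_domination_number_def
  proof (rule Least_equality)
    show "\<exists>S. power_dominating V E S \<and> card S = 1" using P1 by force
  next
    fix k assume "\<exists>S. power_dominating V E S \<and> card S = k"
    then obtain S where S: "power_dominating V E S" "card S = k" by blast
    show "1 \<le> k"
    proof (rule ccontr)
      assume "\<not> 1 \<le> k"
      moreover have "finite S" using S finite_subset[OF _ finV] unfolding power_dominating_def by blast
      ultimately have "S = {}" using S(2) card_0_eq by (metis less_one not_le)
      then show False using S(1) Vne fe unfolding power_dominating_def cl_def set_cnbhd_def by simp
    qed
  qed
qed

end
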